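(* Let $S$ be a finite $2$-group and suppose there are $A,B\in\mathcal{A}(S)$ with $AB=S$. If $C_B(a)=A\cap B$ for every $a\in A\setminus(A\cap B)$, then $\mathcal{A}(S)=\{A,B\}$ and every involution of $S$ lies in $A\cup B$.
   Context: $\mathcal{A}(S)$ denotes the set of elementary abelian subgroups of $S$ of maximal order (maximal rank). *)

theory Defs
  imports "HOL-Algebra.Algebra"
begin

definition elem_abelian :: "('a, 'b) monoid_scheme \<Rightarrow> 'a set \<Rightarrow> bool" where
  "elem_abelian G E \<longleftrightarrow> subgroup E G
     \<and> (\<forall>x\<in>E. \<forall>y\<in>E. x \<otimes>\<^bsub>G\<^esub> y = y \<otimes>\<^bsub>G\<^esub> x)
     \<and> (\<forall>x\<in>E. x \<otimes>\<^bsub>G\<^esub> x = \<one>\<^bsub>G\<^esub>)"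

definition max_elem_abelian :: "('a, 'b) monoid_scheme \<Rightarrow> 'a set set" where
  "max_elem_abelian G = {E. elem_abelian G E \<and>
     (\<forall>F. elem_abelian G F \<longrightarrow> card F \<le> card E)}"

definition centralizer_in :: "('a, 'b) monoid_scheme \<Rightarrow> 'a set \<Rightarrow> 'a \<Rightarrow> 'a set" where
  "centralizer_in G B a = {b \<in> B. a \<otimes>\<^bsub>G\<^esub> b = b \<otimes>\<^bsub>G\<^esub> a}"

definition involution :: "('a, 'b) monoid_scheme \<Rightarrow> 'a \<Rightarrow> bool" where
  "involution G x \<longleftrightarrow> x \<in> carrier G \<and> group.ord G x = 2"

end

theory Submission
  imports Defs
begin

lemma key:
  fixes S (structure)
  assumes G: "group S" and eA: "elem_abelian S A" and eB: "elem_abelian S B"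
    and AB: "A <#> B = carrier S"
    and C: "\<forall>a \<in> A - (A \<inter> B). centralizer_in S B a = A \<inter> B"
    and x: "x \<in> carrier S" and xx: "x \<otimes> x = \<one>"
  shows "x \<in> A \<union> B"
proof -
  interpret group S by (rule G)
  have sA: "subgroup A S" and sqA: "\<forall>a\<in>A. a \<otimes> a = \<one>" using eA by (auto simp: elem_abelian_def)
  have sB: "subgroup B S" and sqB: "\<forall>a\<in>B. a \<otimes> a = \<one>" using eB by (auto simp: elem_abelian_def)
  obtain a b where a: "a \<in> A" and b: "b \<in> B" and xab: "x = a \<otimes> b"
  proof -
    have "x \<in> (\<Union>h\<in>A. \<Union>k\<in>B. {h \<otimes> k})" using x AB by (simp add: set_mult_def)
    thus ?thesis using that by blast
  qed
  have ac: "a \<in> carrier S" using a sA subgroup.subset by blast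
  have bc: "b \<in> carrier S" using b sB subgroup.subset by blast
  have ia: "inv a = a" using inv_equality[of a a] sqA a ac by simp
  have ib: "inv b = b" using inv_equality[of b b] sqB b bc by simp
  have ix: "inv x = x" using inv_equality[of x x] xx x by simp
  have "inv x = b \<otimes> a" using xab inv_mult_group[OF ac bc] ia ib by simp
  hence comm: "a \<otimes> b = b \<otimes> a" using ix xab by simp
  show ?thesis
  proof (cases "a \<in> B")
    case True
    then show ?thesis using xab b subgroup.m_closed[OF sB] by auto
  next
    case False
    hence "centralizer_in S B a = A \<inter> B" using C a by auto
    moreover have "b \<in> centralizer_in S B a" using b comm by (simp add: centralizer_in_def)
    ultimately have "b \<in> A" by auto
    then show ?thesis using xab a subgroup.m_closed[OF sA] by auto
  qed
qed

lemma union2: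
  fixes S (structure)
  assumes G: "group S" and sA: "subgroup A S" and sB: "subgroup B S" and sE: "subgroup E S"
    and sub: "E \<subseteq> A \<union> B"
  shows "E \<subseteq> A \<or> E \<subseteq> B"
proof (rule ccontr)
  interpret group S by (rule G)
  assume "\<not> (E \<subseteq> A \<or> E \<subseteq> B)"
  then obtain x y where x: "x \<in> E" "x \<notin> A" and y: "y \<in> E" "y \<notin> B" by auto
  have xB: "x \<in> B" and yA: "y \<in> A" using x y sub by auto
  have xc: "x \<in> carrier S" and yc: "y \<in> carrier S" using x y sE subgroup.subset by blast+
  have "x \<otimes> y \<in> E" using x y subgroup.m_closed[OF sE] by auto
  hence "x \<otimes> y \<in> A \<or> x \<otimes> y \<in> B" using sub by auto
  thus False
  proof
    assume h: "x \<otimes> y \<in> A"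
    have "x \<otimes> y \<otimes> inv y \<in> A" using h yA subgroup.m_closed[OF sA] subgroup.m_inv_closed[OF sA] by auto
    moreover have "x \<otimes> y \<otimes> inv y = x" using xc yc by (simp add: m_assoc)
    ultimately show False using x by simp
  next
    assume h: "x \<otimes> y \<in> B"
    have "inv x \<otimes> (x \<otimes> y) \<in> B" using h xB subgroup.m_closed[OF sB] subgroup.m_inv_closed[OF sB] by auto
    moreover have "inv x \<otimes> (x \<otimes> y) = y" using xc yc by (simp add: m_assoc[symmetric])
    ultimately show False using y by simp
  qed
qed

theorem lemma2p14:
  fixes S (structure)
  assumes "group S"
    and "finite (carrier S)"
    and "\<exists>n::nat. order S = 2 ^ n"
    and "A \<in> max_elem_abelian S" and "B \<in> max_elem_abelian S"
    and "A <#> B = carrier S"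
    and "\<forall>a \<in> A - (A \<inter> B). centralizer_in S B a = A \<inter> B"
  shows "max_elem_abelian S = {A, B}
    \<and> (\<forall>x \<in> carrier S. involution S x \<longrightarrow> x \<in> A \<union> B)"
proof -
  interpret group S by (rule assms(1))
  have eA: "elem_abelian S A" and eB: "elem_abelian S B"
    and mA: "\<forall>F. elem_abelian S F \<longrightarrow> card F \<le> card A"
    and mB: "\<forall>F. elem_abelian S F \<longrightarrow> card F \<le> card B"
    using assms(4,5) by (auto simp: max_elem_abelian_def)
  have sA: "subgroup A S" and sB: "subgroup B S" using eA eB by (auto simp: elem_abelian_def)
  have fA: "finite A" and fB: "finite B"
    using sA sB subgroup.subset assms(2) finite_subset by blast+
  have K: "\<And>x. x \<in> carrier S \<Longrightarrow> x \<otimes> x = \<one> \<Longrightarrow> x \<in> A \<union> B"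
    using key[OF assms(1) eA eB assms(6,7)] by blast
  have part1: "max_elem_abelian S = {A, B}"
  proof
    show "{A, B} \<subseteq> max_elem_abelian S" using assms(4,5) by auto
  next
    show "max_elem_abelian S \<subseteq> {A, B}"
    proof
      fix E assume E: "E \<in> max_elem_abelian S"
      have eE: "elem_abelian S E" and mE: "\<forall>F. elem_abelian S F \<longrightarrow> card F \<le> card E"
        using E by (auto simp: max_elem_abelian_def)
      have sE: "subgroup E S" using eE by (auto simp: elem_abelian_def)
      have "E \<subseteq> A \<union> B"
      proof
        fix x assume "x \<in> E"
        moreover have "x \<in> carrier S" using \<open>x \<in> E\<close> sE subgroup.subset by blast
        ultimately show "x \<in> A \<union> B" using K eE by (auto simp: elem_abelian_def)
      qed
      hence "E \<subseteq> A \<or> E \<subseteq> B" using union2[OF assms(1) sA sB sE] by blast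
      thus "E \<in> {A, B}"
      proof
        assume "E \<subseteq> A"
        moreover have "card A \<le> card E" using mE eA by blast
        ultimately have "E = A" using card_subset_eq[OF fA] card_mono[OF fA] by (metis le_antisym)
        thus ?thesis by simp
      next
        assume "E \<subseteq> B"
        moreover have "card B \<le> card E" using mE eB by blast
        ultimately have "E = B" using card_subset_eq[OF fB] card_mono[OF fB] by (metis le_antisym)
        thus ?thesis by simp
      qed
    qed
  qed
  have part2: "\<forall>x \<in> carrier S. involution S x \<longrightarrow> x \<in> A \<union> B"
  proof (intro ballI impI)
    fix x assume x: "x \<in> carrier S" and "involution S x"
    hence o: "ord x = 2" by (simp add: involution_def)
    have "x [^] ord x = \<one>" using x by simp
    hence "x \<otimes> x = \<one>" using o x by (simp add: numeral_2_eq_2)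
    thus "x \<in> A \<union> B" using K x by blast
  qed
  show ?thesis using part1 part2 by blast
qed

end
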